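(* Let $(E,\pi,M)$ be a bundle with a connection $\Delta^h$, let $V\subseteq E$ be open, let $\{e_I\}$ be a frame of $T(E)$ over $V$ with $\{e_a\}$ a basis of $\Delta^v$, let $\{X_I\}$ be the frame adapted to $\{e_I\}$ and $\Gamma_\mu^a$ the coefficients of $\Delta^h$ in $\{X_I\}$, and let $U\subseteq V$. Consider frames $\tilde e_\mu=A_\mu^\nu e_\nu+A_\mu^b e_b$, $\tilde e_a=A_a^b e_b$ over $V$, where $[A_\mu^\nu]$, $[A_a^b]$ are non-degenerate matrix-valued functions on $V$ constant on the fibres of $\pi$ and $A_\mu^b\colon V\to\mathbb{K}$. Then all frames $\{\tilde X_I\}$ normal on $U$ for $\Delta^h$ (adapted to such frames $\{\tilde e_I\}$) are adapted to frames $\{\tilde e_I\}$ given on $U$ by $$\tilde e_\mu|_U=\big(A_\mu^\nu(e_\nu+\Gamma_\nu^b e_b)\big)|_U,\qquad \tilde e_a|_U=(A_a^b e_b)|_U,$$ with $[A_\mu^\nu]$, $[A_a^b]$ non-degenerate matrix-valued functions on $V$ constant on the fibres. Moreover, the frame $\{\tilde X_I\}$ adapted on $V$ to such a $\{\tilde e_I\}$ satisfies $$\tilde X_\mu|_U=(A_\mu^\nu X_\nu)|_U=\tilde e_\mu|_U,\qquad \tilde X_a|_U=(A_a^b X_b)|_U=\tilde e_a|_U .$$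
   Context: $(E,\pi,M)$: bundle with $E,M$ differentiable manifolds over $\mathbb{K}=\mathbb{R}$ or $\mathbb{C}$, $\dim M=n$, fibre dimension $r$. Indices $\mu,\nu$ run over $1,\dots,n$, $a,b$ over $n+1,\dots,n+r$, $I$ over $1,\dots,n+r$; summation convention. Vertical distribution: $\Delta^v_p=T_p(\pi^{-1}(\pi(p)))$. A connection is an $n$-dimensional distribution $\Delta^h$ on $E$ with $\Delta^v_p\oplus\Delta^h_p=T_p(E)$. For a local frame $\{e_I\}$ of $T(E)$ with $\{e_a\}$ a basis of $\Delta^v$, the adapted frame is $\{X_I\}$ with $X_\mu=(\pi_*|_{\Delta^h})^{-1}\pi_*(e_\mu)$, $X_a=e_a$; then $X_\mu=e_\mu+\Gamma_\mu^b e_b$ for unique functions $\Gamma_\mu^a$ (the 2-index coefficients of $\Delta^h$ in $\{X_I\}$). A frame $\{X_I\}$ adapted to a frame $\{e_I\}$ defined over an open set $V\supseteq U$ is normal for $\Delta^h$ on $U$ if all its coefficients $\Gamma_\mu^a$ vanish on $U$. *)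

theory Defs
  imports "HOL-Analysis.Analysis"
begin

text \<open>Pointwise (fibrewise linear-algebraic) model of a bundle with connection.
  Scalars: a field 'k (covers K = real or complex).  Tangent vectors of E live in an
  ambient type 'w, the tangent space at p is the subspace T p.  Tangent vectors of M
  live in 'u.  pistar p is the differential of pi at p; its kernel on T p is the
  vertical space Dv p = T_p(pi^-1(pi p)).
  Indices: mu, nu in {1..n}; a, b in {n+1..n+r}; I in {1..n+r}.\<close>

definition bundle_connection ::
  "('k::field \<Rightarrow> 'w::ab_group_add \<Rightarrow> 'w) \<Rightarrow> ('k \<Rightarrow> 'u::ab_group_add \<Rightarrow> 'u) \<Rightarrow>
   ('e \<Rightarrow> 'm) \<Rightarrow> ('e \<Rightarrow> 'w \<Rightarrow> 'u) \<Rightarrow> ('e \<Rightarrow> 'w set) \<Rightarrow> ('m \<Rightarrow> 'u set) \<Rightarrow>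
   ('e \<Rightarrow> 'w set) \<Rightarrow> ('e \<Rightarrow> 'w set) \<Rightarrow> nat \<Rightarrow> nat \<Rightarrow> bool" where
  "bundle_connection sc scM \<pi> pistar T TM Dv Dh n r \<longleftrightarrow>
     vector_space sc \<and> vector_space scM \<and>
     (\<forall>p. module.subspace sc (T p) \<and> vector_space.dim sc (T p) = n + r \<and>
          module.subspace scM (TM (\<pi> p)) \<and> vector_space.dim scM (TM (\<pi> p)) = n \<and>
          Vector_Spaces.linear sc scM (pistar p) \<and> pistar p ` T p = TM (\<pi> p) \<and>
          Dv p = {v \<in> T p. pistar p v = 0} \<and>
          module.subspace sc (Dh p) \<and> Dh p \<subseteq> T p \<and> vector_space.dim sc (Dh p) = n \<and>
          Dv p \<inter> Dh p = {0} \<and> {x + y | x y. x \<in> Dv p \<and> y \<in> Dh p} = T p)"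

definition vertical_frame_on ::
  "('k::field \<Rightarrow> 'w::ab_group_add \<Rightarrow> 'w) \<Rightarrow> ('e \<Rightarrow> 'w set) \<Rightarrow> ('e \<Rightarrow> 'w set) \<Rightarrow>
   nat \<Rightarrow> nat \<Rightarrow> 'e set \<Rightarrow> (nat \<Rightarrow> 'e \<Rightarrow> 'w) \<Rightarrow> bool" where
  "vertical_frame_on sc T Dv n r V e \<longleftrightarrow>
     (\<forall>p\<in>V. inj_on (\<lambda>I. e I p) {1..n+r} \<and>
            \<not> module.dependent sc ((\<lambda>I. e I p) ` {1..n+r}) \<and>
            module.span sc ((\<lambda>I. e I p) ` {1..n+r}) = T p \<and>
            module.span sc ((\<lambda>a. e a p) ` {n+1..n+r}) = Dv p)"

definition adapted_frame ::
  "('e \<Rightarrow> 'w \<Rightarrow> 'u) \<Rightarrow> ('e \<Rightarrow> 'w set) \<Rightarrow> nat \<Rightarrow> (nat \<Rightarrow> 'e \<Rightarrow> 'w) \<Rightarrow> nat \<Rightarrow> 'e \<Rightarrow> 'w" where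
  "adapted_frame pistar Dh n e I p =
     (if I \<in> {1..n} then (THE h. h \<in> Dh p \<and> pistar p h = pistar p (e I p)) else e I p)"

definition conn_coeff ::
  "('k::field \<Rightarrow> 'w::ab_group_add \<Rightarrow> 'w) \<Rightarrow> ('e \<Rightarrow> 'w \<Rightarrow> 'u) \<Rightarrow> ('e \<Rightarrow> 'w set) \<Rightarrow>
   nat \<Rightarrow> nat \<Rightarrow> (nat \<Rightarrow> 'e \<Rightarrow> 'w) \<Rightarrow> nat \<Rightarrow> 'e \<Rightarrow> nat \<Rightarrow> 'k" where
  "conn_coeff sc pistar Dh n r e \<mu> p =
     (THE g. (\<forall>b. b \<notin> {n+1..n+r} \<longrightarrow> g b = 0) \<and>
             adapted_frame pistar Dh n e \<mu> p = e \<mu> p + (\<Sum>b\<in>{n+1..n+r}. sc (g b) (e b p)))"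

definition normal_on ::
  "('k::field \<Rightarrow> 'w::ab_group_add \<Rightarrow> 'w) \<Rightarrow> ('e \<Rightarrow> 'w \<Rightarrow> 'u) \<Rightarrow> ('e \<Rightarrow> 'w set) \<Rightarrow>
   nat \<Rightarrow> nat \<Rightarrow> 'e set \<Rightarrow> (nat \<Rightarrow> 'e \<Rightarrow> 'w) \<Rightarrow> bool" where
  "normal_on sc pistar Dh n r U e \<longleftrightarrow>
     (\<forall>p\<in>U. \<forall>\<mu>\<in>{1..n}. \<forall>b\<in>{n+1..n+r}. conn_coeff sc pistar Dh n r e \<mu> p b = 0)"

definition nondegenerate :: "nat set \<Rightarrow> (nat \<Rightarrow> nat \<Rightarrow> 'k::field) \<Rightarrow> bool" where
  "nondegenerate S A \<longleftrightarrow>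
     (\<exists>B. (\<forall>i\<in>S. \<forall>j\<in>S. (\<Sum>l\<in>S. A i l * B l j) = (if i = j then 1 else 0)) \<and>
          (\<forall>i\<in>S. \<forall>j\<in>S. (\<Sum>l\<in>S. B i l * A l j) = (if i = j then 1 else 0)))"

definition fibre_constant_on :: "('e \<Rightarrow> 'm) \<Rightarrow> 'e set \<Rightarrow> ('e \<Rightarrow> 'x) \<Rightarrow> bool" where
  "fibre_constant_on \<pi> V f \<longleftrightarrow> (\<forall>p\<in>V. \<forall>q\<in>V. \<pi> p = \<pi> q \<longrightarrow> f p = f q)"

definition new_frame ::
  "('k::field \<Rightarrow> 'w::ab_group_add \<Rightarrow> 'w) \<Rightarrow> nat \<Rightarrow> nat \<Rightarrow>
   ('e \<Rightarrow> nat \<Rightarrow> nat \<Rightarrow> 'k) \<Rightarrow> ('e \<Rightarrow> nat \<Rightarrow> nat \<Rightarrow> 'k) \<Rightarrow> ('e \<Rightarrow> nat \<Rightarrow> nat \<Rightarrow> 'k) \<Rightarrow>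
   (nat \<Rightarrow> 'e \<Rightarrow> 'w) \<Rightarrow> nat \<Rightarrow> 'e \<Rightarrow> 'w" where
  "new_frame sc n r Am Amb Aab e I p =
     (if I \<in> {1..n}
      then (\<Sum>\<nu>\<in>{1..n}. sc (Am p I \<nu>) (e \<nu> p)) + (\<Sum>b\<in>{n+1..n+r}. sc (Amb p I b) (e b p))
      else (\<Sum>b\<in>{n+1..n+r}. sc (Aab p I b) (e b p)))"

end

theory Submission
  imports Defs
begin


context vector_space begin

lemma fam_indep:
  assumes "finite S" "inj_on f S" "\<not> dependent (f ` S)"
    "(\<Sum>i\<in>S. scale (c i) (f i)) = 0" "i \<in> S"
  shows "c i = 0"
proof -
  define u where "u = (\<lambda>v. c (the_inv_into S f v))"
  have "(\<Sum>v\<in>f ` S. scale (u v) v) = (\<Sum>i\<in>S. scale (u (f i)) (f i))"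
    using assms(2) by (simp add: sum.reindex)
  also have "\<dots> = (\<Sum>i\<in>S. scale (c i) (f i))"
    using assms(2) by (intro sum.cong) (auto simp: u_def the_inv_into_f_f)
  finally have "(\<Sum>v\<in>f ` S. scale (u v) v) = 0" using assms(4) by simp
  hence "\<forall>v\<in>f ` S. u v = 0" using assms(1,3) dependent_finite[of "f ` S"] by auto
  hence "u (f i) = 0" using assms(5) by auto
  thus ?thesis using assms(2,5) by (simp add: u_def the_inv_into_f_f)
qed

lemma span_repr:
  assumes "finite S" "inj_on f S" "v \<in> span (f ` S)"
  shows "\<exists>c. v = (\<Sum>i\<in>S. scale (c i) (f i))"
proof -
  obtain u where "v = (\<Sum>w\<in>f ` S. scale (u w) w)"
    using assms(3) span_finite[of "f ` S"] assms(1) by auto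
  also have "\<dots> = (\<Sum>i\<in>S. scale (u (f i)) (f i))"
    using assms(2) by (simp add: sum.reindex)
  finally have "v = (\<Sum>i\<in>S. scale (u (f i)) (f i))" .
  thus ?thesis by (rule exI[of _ "\<lambda>i. u (f i)"])
qed

lemma coeff_unique:
  assumes "finite S"
    and ind: "\<And>c. (\<Sum>b\<in>S. scale (c b) (g b)) = 0 \<Longrightarrow> \<forall>b\<in>S. c b = 0"
    and ex: "v = (\<Sum>b\<in>S. scale (c b) (g b))"
  shows "\<exists>!d. (\<forall>b. b \<notin> S \<longrightarrow> d b = 0) \<and> v = (\<Sum>b\<in>S. scale (d b) (g b))"
proof (rule ex1I[of _ "\<lambda>b. if b \<in> S then c b else 0"])
  show "(\<forall>b. b \<notin> S \<longrightarrow> (if b \<in> S then c b else 0) = 0) \<and>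
        v = (\<Sum>b\<in>S. scale (if b \<in> S then c b else 0) (g b))"
    using ex by simp
next
  fix d assume d: "(\<forall>b. b \<notin> S \<longrightarrow> d b = 0) \<and> v = (\<Sum>b\<in>S. scale (d b) (g b))"
  have "(\<Sum>b\<in>S. scale (d b - c b) (g b)) = 0"
    using d ex by (simp add: scale_left_diff_distrib sum_subtractf)
  hence "\<forall>b\<in>S. d b - c b = 0" by (rule ind)
  thus "d = (\<lambda>b. if b \<in> S then c b else 0)" using d by auto
qed

lemma sum_swap_scale:
  "(\<Sum>i\<in>S. scale (a i) (\<Sum>j\<in>R. scale (b i j) (f j))) = (\<Sum>j\<in>R. scale (\<Sum>i\<in>S. a i * b i j) (f j))"
  by (simp add: scale_sum_right scale_sum_left sum.swap[of _ S R])

end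

lemma kron_sum:
  fixes k :: "nat \<Rightarrow> 'k::field"
  assumes "finite S" "d \<in> S"
  shows "(\<Sum>b\<in>S. k b * (if b = d then 1 else 0)) = k d"
  using assms by (simp add: if_distrib sum.delta' cong: if_cong)


theorem proposition4p1:
  fixes sc :: "'k::field \<Rightarrow> 'w::ab_group_add \<Rightarrow> 'w"
    and scM :: "'k \<Rightarrow> 'u::ab_group_add \<Rightarrow> 'u"
    and \<pi> :: "'e::topological_space \<Rightarrow> 'm"
    and pistar :: "'e \<Rightarrow> 'w \<Rightarrow> 'u"
    and T Dv Dh :: "'e \<Rightarrow> 'w set" and TM :: "'m \<Rightarrow> 'u set"
    and n r :: nat and V U :: "'e set" and e :: "nat \<Rightarrow> 'e \<Rightarrow> 'w"
  assumes conn: "bundle_connection sc scM \<pi> pistar T TM Dv Dh n r"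
    and V_open: "open V"
    and frame: "vertical_frame_on sc T Dv n r V e"
    and UV: "U \<subseteq> V"
  shows
   "(\<forall>Am Amb Aab.
       (\<forall>p\<in>V. nondegenerate {1..n} (Am p) \<and> nondegenerate {n+1..n+r} (Aab p)) \<and>
       fibre_constant_on \<pi> V Am \<and> fibre_constant_on \<pi> V Aab \<and>
       normal_on sc pistar Dh n r U (new_frame sc n r Am Amb Aab e) \<longrightarrow>
       (\<forall>p\<in>U.
          (\<forall>\<mu>\<in>{1..n}. new_frame sc n r Am Amb Aab e \<mu> p =
              (\<Sum>\<nu>\<in>{1..n}. sc (Am p \<mu> \<nu>)
                 (e \<nu> p + (\<Sum>b\<in>{n+1..n+r}. sc (conn_coeff sc pistar Dh n r e \<nu> p b) (e b p))))) \<and>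
          (\<forall>a\<in>{n+1..n+r}. new_frame sc n r Am Amb Aab e a p =
              (\<Sum>b\<in>{n+1..n+r}. sc (Aab p a b) (e b p)))))
    \<and>
    (\<forall>Am Amb Aab.
       (\<forall>p\<in>V. nondegenerate {1..n} (Am p) \<and> nondegenerate {n+1..n+r} (Aab p)) \<and>
       fibre_constant_on \<pi> V Am \<and> fibre_constant_on \<pi> V Aab \<and>
       (\<forall>p\<in>U. \<forall>\<mu>\<in>{1..n}. new_frame sc n r Am Amb Aab e \<mu> p =
              (\<Sum>\<nu>\<in>{1..n}. sc (Am p \<mu> \<nu>)
                 (e \<nu> p + (\<Sum>b\<in>{n+1..n+r}. sc (conn_coeff sc pistar Dh n r e \<nu> p b) (e b p))))) \<longrightarrow>
       (\<forall>p\<in>U.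
          (\<forall>\<mu>\<in>{1..n}.
             adapted_frame pistar Dh n (new_frame sc n r Am Amb Aab e) \<mu> p =
               (\<Sum>\<nu>\<in>{1..n}. sc (Am p \<mu> \<nu>) (adapted_frame pistar Dh n e \<nu> p)) \<and>
             adapted_frame pistar Dh n (new_frame sc n r Am Amb Aab e) \<mu> p =
               new_frame sc n r Am Amb Aab e \<mu> p) \<and>
          (\<forall>a\<in>{n+1..n+r}.
             adapted_frame pistar Dh n (new_frame sc n r Am Amb Aab e) a p =
               (\<Sum>b\<in>{n+1..n+r}. sc (Aab p a b) (adapted_frame pistar Dh n e b p)) \<and>
             adapted_frame pistar Dh n (new_frame sc n r Am Amb Aab e) a p =
               new_frame sc n r Am Amb Aab e a p)))"
proof -
  note C = conn[unfolded bundle_connection_def]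
  interpret VS: vector_space sc by (rule conjunct1[OF C])
  interpret VS2: vector_space scM by (rule conjunct1[OF conjunct2[OF C]])
  note CP = spec[OF conjunct2[OF conjunct2[OF C]]]
  have cT: "VS.subspace (T p)" for p using CP[of p] by (elim conjE)
  have cL: "Vector_Spaces.linear sc scM (pistar p)" for p using CP[of p] by (elim conjE)
  have cDv: "Dv p = {v \<in> T p. pistar p v = 0}" for p using CP[of p] by (elim conjE)
  have cDh: "VS.subspace (Dh p)" for p using CP[of p] by (elim conjE)
  have cDhT: "Dh p \<subseteq> T p" for p using CP[of p] by (elim conjE)
  have cI: "Dv p \<inter> Dh p = {0}" for p using CP[of p] by (elim conjE)
  have cS: "{x + y | x y. x \<in> Dv p \<and> y \<in> Dh p} = T p" for p using CP[of p] by (elim conjE)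
  have mh: "module_hom sc scM (pistar p)" for p using cL module_hom_iff_linear by metis
  note FR = frame[unfolded vertical_frame_on_def]
  have frI: "inj_on (\<lambda>I. e I p) {1..n+r}" if "p \<in> V" for p using bspec[OF FR that] by (elim conjE)
  have frD: "\<not> VS.dependent ((\<lambda>I. e I p) ` {1..n+r})" if "p \<in> V" for p using bspec[OF FR that] by (elim conjE)
  have frT: "VS.span ((\<lambda>I. e I p) ` {1..n+r}) = T p" if "p \<in> V" for p using bspec[OF FR that] by (elim conjE)
  have frV: "VS.span ((\<lambda>a. e a p) ` {n+1..n+r}) = Dv p" if "p \<in> V" for p using bspec[OF FR that] by (elim conjE)
  have HU: "h1 = h2" if "h1 \<in> Dh p" "h2 \<in> Dh p" "pistar p h1 = pistar p h2" for p h1 h2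
  proof -
    have "h1 - h2 \<in> Dh p" using cDh[of p] that(1,2) by (rule VS.subspace_diff)
    moreover have "h1 - h2 \<in> T p" using calculation cDhT[of p] by (rule subsetD[rotated])
    moreover have "pistar p (h1 - h2) = 0" using module_hom.diff[OF mh] that by simp
    ultimately have "h1 - h2 \<in> Dv p \<inter> Dh p" unfolding cDv[of p] by simp
    thus ?thesis using cI[of p] by simp
  qed
  have HE: "\<exists>h. h \<in> Dh p \<and> pistar p h = pistar p w" if "w \<in> T p" for p w
  proof -
    have "w \<in> {x + y | x y. x \<in> Dv p \<and> y \<in> Dh p}" using that cS[of p] by simp
    then obtain x y where xy: "x \<in> Dv p" "y \<in> Dh p" "w = x + y" by blast
    have "pistar p x = 0" using xy(1) unfolding cDv[of p] by simp
    hence "pistar p y = pistar p w" using xy module_hom.add[OF mh] by simp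
    with xy(2) show ?thesis by (intro exI[of _ y] conjI)
  qed
  have AD: "adapted_frame pistar Dh n f \<mu> p \<in> Dh p \<and>
      pistar p (adapted_frame pistar Dh n f \<mu> p) = pistar p (f \<mu> p)"
    if "\<mu> \<in> {1..n}" "f \<mu> p \<in> T p" for f \<mu> p
  proof -
    note tw = that
    have "\<exists>!h. h \<in> Dh p \<and> pistar p h = pistar p (f \<mu> p)"
    proof -
      obtain h where h: "h \<in> Dh p" "pistar p h = pistar p (f \<mu> p)" using HE[OF tw(2)] by blast
      show ?thesis
      proof (rule ex1I[of _ h])
        fix h' assume "h' \<in> Dh p \<and> pistar p h' = pistar p (f \<mu> p)"
        thus "h' = h" using h HU[of h' p h] by simp
      qed (use h in simp)
    qed
    from theI'[OF this] show ?thesis using that(1) unfolding adapted_frame_def by simp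
  qed
  have ADeq: "adapted_frame pistar Dh n f \<mu> p = h"
    if "\<mu> \<in> {1..n}" "h \<in> Dh p" "pistar p h = pistar p (f \<mu> p)" for f \<mu> p h
  proof -
    have "(THE h. h \<in> Dh p \<and> pistar p h = pistar p (f \<mu> p)) = h"
    proof (rule the_equality)
      fix h' assume "h' \<in> Dh p \<and> pistar p h' = pistar p (f \<mu> p)"
      thus "h' = h" using that(2,3) HU[of h' p h] by simp
    qed (use that(2,3) in simp)
    thus ?thesis using that(1) unfolding adapted_frame_def by simp
  qed
  have eT: "e I p \<in> T p" if "p \<in> V" "I \<in> {1..n+r}" for p I
    using frT[OF that(1)] that(2) VS.span_base[of "e I p" "(\<lambda>I. e I p) ` {1..n+r}"] by simp
  have eDv: "e b p \<in> Dv p" if "p \<in> V" "b \<in> {n+1..n+r}" for p b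
    using frV[OF that(1)] that(2) VS.span_base[of "e b p" "(\<lambda>a. e a p) ` {n+1..n+r}"] by simp
  have Vrt: "\<exists>c. x = (\<Sum>b\<in>{n+1..n+r}. sc (c b) (e b p))"
    if "p \<in> V" "x \<in> T p" "pistar p x = 0" for p x
  proof -
    have "x \<in> VS.span ((\<lambda>a. e a p) ` {n+1..n+r})" unfolding frV[OF that(1)] cDv[of p] using that(2,3) by simp
    moreover have "inj_on (\<lambda>a. e a p) {n+1..n+r}"
      using frI[OF that(1)] by (rule inj_on_subset) auto
    ultimately show ?thesis using VS.span_repr[of "{n+1..n+r}" "\<lambda>a. e a p" x] by simp
  qed
  have indE: "\<forall>b\<in>{n+1..n+r}. c b = 0"
    if "p \<in> V" "(\<Sum>b\<in>{n+1..n+r}. sc (c b) (e b p)) = 0" for p c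
  proof
    fix b assume b: "b \<in> {n+1..n+r}"
    have sub: "{n+1..n+r} \<subseteq> {1..n+r}" by auto
    have "inj_on (\<lambda>a. e a p) {n+1..n+r}"
      using frI[OF that(1)] sub by (rule inj_on_subset)
    moreover have "\<not> VS.dependent ((\<lambda>a. e a p) ` {n+1..n+r})"
      using frD[OF that(1)] VS.dependent_mono[of _ "(\<lambda>I. e I p) ` {1..n+r}"] sub by (meson image_mono)
    ultimately show "c b = 0" using VS.fam_indep[of "{n+1..n+r}" "\<lambda>a. e a p" c b] that(2) b by simp
  qed
  have Gam: "adapted_frame pistar Dh n e \<nu> p =
      e \<nu> p + (\<Sum>b\<in>{n+1..n+r}. sc (conn_coeff sc pistar Dh n r e \<nu> p b) (e b p))"
    if "p \<in> V" "\<nu> \<in> {1..n}" for p \<nu>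
  proof -
    let ?X = "adapted_frame pistar Dh n e \<nu> p"
    have pV': "p \<in> V" by (rule that(1))
    have eT': "e \<nu> p \<in> T p" using eT[OF that(1)] that(2) by simp
    have X: "?X \<in> Dh p" "pistar p ?X = pistar p (e \<nu> p)" using AD[of \<nu> e p, OF that(2) eT'] by auto
    have "?X - e \<nu> p \<in> T p" using cT[of p] subsetD[OF cDhT X(1)] eT' by (rule VS.subspace_diff)
    moreover have "pistar p (?X - e \<nu> p) = 0" using X module_hom.diff[OF mh] by simp
    ultimately obtain c where c: "?X - e \<nu> p = (\<Sum>b\<in>{n+1..n+r}. sc (c b) (e b p))"
      using Vrt[OF pV'] by blast
    have "\<exists>!d. (\<forall>b. b \<notin> {n+1..n+r} \<longrightarrow> d b = 0) \<and>
        ?X - e \<nu> p = (\<Sum>b\<in>{n+1..n+r}. sc (d b) (e b p))"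
      by (rule VS.coeff_unique[OF _ _ c]) (use indE[OF that(1)] in auto)
    hence "\<exists>!d. (\<forall>b. b \<notin> {n+1..n+r} \<longrightarrow> d b = 0) \<and>
        ?X = e \<nu> p + (\<Sum>b\<in>{n+1..n+r}. sc (d b) (e b p))"
      by (simp add: diff_eq_eq add.commute)
    from theI'[OF this] show ?thesis unfolding conn_coeff_def by blast
  qed
  show ?thesis
  proof (rule conjI)
    show "\<forall>Am Amb Aab.
       (\<forall>p\<in>V. nondegenerate {1..n} (Am p) \<and> nondegenerate {n+1..n+r} (Aab p)) \<and>
       fibre_constant_on \<pi> V Am \<and> fibre_constant_on \<pi> V Aab \<and>
       normal_on sc pistar Dh n r U (new_frame sc n r Am Amb Aab e) \<longrightarrow>
       (\<forall>p\<in>U.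
          (\<forall>\<mu>\<in>{1..n}. new_frame sc n r Am Amb Aab e \<mu> p =
              (\<Sum>\<nu>\<in>{1..n}. sc (Am p \<mu> \<nu>)
                 (e \<nu> p + (\<Sum>b\<in>{n+1..n+r}. sc (conn_coeff sc pistar Dh n r e \<nu> p b) (e b p))))) \<and>
          (\<forall>a\<in>{n+1..n+r}. new_frame sc n r Am Amb Aab e a p =
              (\<Sum>b\<in>{n+1..n+r}. sc (Aab p a b) (e b p))))"
    proof (intro allI impI ballI conjI)
      fix Am Amb Aab p
      assume H: "(\<forall>p\<in>V. nondegenerate {1..n} (Am p) \<and> nondegenerate {n+1..n+r} (Aab p)) \<and>
       fibre_constant_on \<pi> V Am \<and> fibre_constant_on \<pi> V Aab \<and>
       normal_on sc pistar Dh n r U (new_frame sc n r Am Amb Aab e)"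
        and pU: "p \<in> U"
      have pV: "p \<in> V" using pU UV by blast
      define E' where "E' = new_frame sc n r Am Amb Aab e"
      show "new_frame sc n r Am Amb Aab e a p = (\<Sum>b\<in>{n+1..n+r}. sc (Aab p a b) (e b p))"
        if "a \<in> {n+1..n+r}" for a
        using that by (simp add: new_frame_def)
      fix \<mu> assume mu: "\<mu> \<in> {1..n}"
      show "new_frame sc n r Am Amb Aab e \<mu> p =
              (\<Sum>\<nu>\<in>{1..n}. sc (Am p \<mu> \<nu>)
                 (e \<nu> p + (\<Sum>b\<in>{n+1..n+r}. sc (conn_coeff sc pistar Dh n r e \<nu> p b) (e b p))))"
      proof -
        let ?S2 = "{n+1..n+r}"
        have nd: "nondegenerate ?S2 (Aab p)" using bspec[OF conjunct1[OF H] pV] by (elim conjE)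
        then obtain B where AB1: "\<forall>i\<in>?S2. \<forall>j\<in>?S2. (\<Sum>l\<in>?S2. Aab p i l * B l j) = (if i = j then 1 else 0)"
          and AB2: "\<forall>i\<in>?S2. \<forall>j\<in>?S2. (\<Sum>l\<in>?S2. B i l * Aab p l j) = (if i = j then 1 else 0)"
          unfolding nondegenerate_def by blast
        have tb: "E' b p = (\<Sum>c\<in>?S2. sc (Aab p b c) (e c p))" if "b \<in> ?S2" for b
          using that by (simp add: E'_def new_frame_def)
        have indN: "\<forall>b\<in>?S2. k b = 0" if kz: "(\<Sum>b\<in>?S2. sc (k b) (E' b p)) = 0" for k
        proof
          have "(\<Sum>b\<in>?S2. sc (k b) (E' b p)) = (\<Sum>b\<in>?S2. sc (k b) (\<Sum>c\<in>?S2. sc (Aab p b c) (e c p)))"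
            by (intro sum.cong refl) (simp add: tb)
          also have "\<dots> = (\<Sum>c\<in>?S2. sc (\<Sum>b\<in>?S2. k b * Aab p b c) (e c p))"
            by (rule VS.sum_swap_scale)
          finally have "(\<Sum>c\<in>?S2. sc (\<Sum>b\<in>?S2. k b * Aab p b c) (e c p)) = 0" using kz by simp
          from indE[OF pV this] have z: "\<forall>c\<in>?S2. (\<Sum>b\<in>?S2. k b * Aab p b c) = 0" .
          fix d assume d: "d \<in> ?S2"
          have "k d = (\<Sum>b\<in>?S2. k b * (if b = d then 1 else 0))" using kron_sum[of ?S2 d k] d by simp
          also have "\<dots> = (\<Sum>b\<in>?S2. k b * (\<Sum>c\<in>?S2. Aab p b c * B c d))"
            using AB1 d by (intro sum.cong refl) simp
          also have "\<dots> = (\<Sum>c\<in>?S2. (\<Sum>b\<in>?S2. k b * Aab p b c) * B c d)"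
            by (simp only: sum_distrib_left sum_distrib_right mult.assoc) (rule sum.swap)
          also have "\<dots> = 0" using z by simp
          finally show "k d = 0" .
        qed
        have eRep: "e c p = (\<Sum>b\<in>?S2. sc (B c b) (E' b p))" if c: "c \<in> ?S2" for c
        proof -
          have "(\<Sum>b\<in>?S2. sc (B c b) (E' b p)) = (\<Sum>b\<in>?S2. sc (B c b) (\<Sum>c'\<in>?S2. sc (Aab p b c') (e c' p)))"
            by (intro sum.cong refl) (simp add: tb)
          also have "\<dots> = (\<Sum>c'\<in>?S2. sc (\<Sum>b\<in>?S2. B c b * Aab p b c') (e c' p))"
            by (rule VS.sum_swap_scale)
          also have "\<dots> = (\<Sum>c'\<in>?S2. sc (if c = c' then 1 else 0) (e c' p))"
            using AB2 c by (intro sum.cong refl) simp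
          also have "\<dots> = (\<Sum>c'\<in>?S2. if c = c' then e c' p else 0)"
            by (intro sum.cong refl) simp
          also have "\<dots> = e c p" using c by simp
          finally show ?thesis by simp
        qed
        have eTn: "e \<nu> p \<in> T p" if "\<nu> \<in> {1..n}" for \<nu> using eT[OF pV, of \<nu>] that by simp
        have eTb: "e b p \<in> T p" if "b \<in> ?S2" for b using eT[OF pV, of b] that by simp
        have E'mu: "E' \<mu> p = (\<Sum>\<nu>\<in>{1..n}. sc (Am p \<mu> \<nu>) (e \<nu> p)) + (\<Sum>b\<in>?S2. sc (Amb p \<mu> b) (e b p))"
          using mu by (simp add: E'_def new_frame_def)
        have E'T: "E' \<mu> p \<in> T p"
          unfolding E'mu
          by (intro VS.subspace_add[OF cT] VS.subspace_sum[OF cT] VS.subspace_scale[OF cT] eTn eTb)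
        let ?Y = "adapted_frame pistar Dh n E' \<mu> p"
        have Y: "?Y \<in> Dh p" "pistar p ?Y = pistar p (E' \<mu> p)" using AD[of \<mu> E' p, OF mu E'T] by auto
        have "?Y - E' \<mu> p \<in> T p" using cT[of p] subsetD[OF cDhT Y(1)] E'T by (rule VS.subspace_diff)
        moreover have "pistar p (?Y - E' \<mu> p) = 0" using Y module_hom.diff[OF mh] by simp
        ultimately obtain x where x: "?Y - E' \<mu> p = (\<Sum>c\<in>?S2. sc (x c) (e c p))"
          using Vrt[OF pV] by blast
        also have "\<dots> = (\<Sum>c\<in>?S2. sc (x c) (\<Sum>b\<in>?S2. sc (B c b) (E' b p)))"
          by (intro sum.cong refl) (metis eRep)
        also have "\<dots> = (\<Sum>b\<in>?S2. sc (\<Sum>c\<in>?S2. x c * B c b) (E' b p))"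
          by (rule VS.sum_swap_scale)
        finally have ex: "?Y - E' \<mu> p = (\<Sum>b\<in>?S2. sc (\<Sum>c\<in>?S2. x c * B c b) (E' b p))" .
        have "\<exists>!d. (\<forall>b. b \<notin> ?S2 \<longrightarrow> d b = 0) \<and> ?Y - E' \<mu> p = (\<Sum>b\<in>?S2. sc (d b) (E' b p))"
          by (rule VS.coeff_unique[OF _ _ ex]) (use indN in auto)
        hence "\<exists>!d. (\<forall>b. b \<notin> ?S2 \<longrightarrow> d b = 0) \<and> ?Y = E' \<mu> p + (\<Sum>b\<in>?S2. sc (d b) (E' b p))"
          by (simp add: diff_eq_eq add.commute)
        from theI'[OF this] have Yc: "?Y = E' \<mu> p + (\<Sum>b\<in>?S2. sc (conn_coeff sc pistar Dh n r E' \<mu> p b) (E' b p))"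
          unfolding conn_coeff_def by blast
        have nrm: "conn_coeff sc pistar Dh n r E' \<mu> p b = 0" if "b \<in> ?S2" for b
          using conjunct2[OF conjunct2[OF conjunct2[OF H]]] pU mu that
          unfolding normal_on_def E'_def by blast
        have "?Y = E' \<mu> p" unfolding Yc using nrm by simp
        hence E'Dh: "E' \<mu> p \<in> Dh p" using Y(1) by simp
        let ?Z = "(\<Sum>\<nu>\<in>{1..n}. sc (Am p \<mu> \<nu>) (adapted_frame pistar Dh n e \<nu> p))"
        have ZDh: "?Z \<in> Dh p"
        proof (intro VS.subspace_sum[OF cDh[of p]] VS.subspace_scale[OF cDh[of p]])
          fix \<nu> assume nu: "\<nu> \<in> {1..n}"
          show "adapted_frame pistar Dh n e \<nu> p \<in> Dh p" using AD[of \<nu> e p, OF nu eTn[OF nu]] by simp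
        qed
        have "pistar p ?Z = (\<Sum>\<nu>\<in>{1..n}. scM (Am p \<mu> \<nu>) (pistar p (adapted_frame pistar Dh n e \<nu> p)))"
          by (simp add: module_hom.sum[OF mh] module_hom.scale[OF mh])
        also have "\<dots> = (\<Sum>\<nu>\<in>{1..n}. scM (Am p \<mu> \<nu>) (pistar p (e \<nu> p)))"
          by (intro sum.cong refl) (use AD[of _ e p] eTn in simp)
        finally have pZ: "pistar p ?Z = (\<Sum>\<nu>\<in>{1..n}. scM (Am p \<mu> \<nu>) (pistar p (e \<nu> p)))" .
        have pb: "pistar p (e b p) = 0" if "b \<in> ?S2" for b
          using eDv[OF pV that] unfolding cDv[of p] by simp
        have "pistar p (E' \<mu> p) = (\<Sum>\<nu>\<in>{1..n}. scM (Am p \<mu> \<nu>) (pistar p (e \<nu> p))) +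
            (\<Sum>b\<in>?S2. scM (Amb p \<mu> b) (pistar p (e b p)))"
          unfolding E'mu by (simp add: module_hom.add[OF mh] module_hom.sum[OF mh] module_hom.scale[OF mh])
        also have "(\<Sum>b\<in>?S2. scM (Amb p \<mu> b) (pistar p (e b p))) = 0"
          by (rule sum.neutral) (simp add: pb)
        finally have "pistar p (E' \<mu> p) = pistar p ?Z" using pZ by simp
        hence "E' \<mu> p = ?Z" using HU[OF E'Dh ZDh] by simp
        also have "\<dots> = (\<Sum>\<nu>\<in>{1..n}. sc (Am p \<mu> \<nu>)
                 (e \<nu> p + (\<Sum>b\<in>{n+1..n+r}. sc (conn_coeff sc pistar Dh n r e \<nu> p b) (e b p))))"
          by (intro sum.cong refl) (simp add: Gam[OF pV])
        finally show ?thesis unfolding E'_def .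
      qed
    qed
  next
    show "\<forall>Am Amb Aab.
       (\<forall>p\<in>V. nondegenerate {1..n} (Am p) \<and> nondegenerate {n+1..n+r} (Aab p)) \<and>
       fibre_constant_on \<pi> V Am \<and> fibre_constant_on \<pi> V Aab \<and>
       (\<forall>p\<in>U. \<forall>\<mu>\<in>{1..n}. new_frame sc n r Am Amb Aab e \<mu> p =
              (\<Sum>\<nu>\<in>{1..n}. sc (Am p \<mu> \<nu>)
                 (e \<nu> p + (\<Sum>b\<in>{n+1..n+r}. sc (conn_coeff sc pistar Dh n r e \<nu> p b) (e b p))))) \<longrightarrow>
       (\<forall>p\<in>U.
          (\<forall>\<mu>\<in>{1..n}.
             adapted_frame pistar Dh n (new_frame sc n r Am Amb Aab e) \<mu> p =
               (\<Sum>\<nu>\<in>{1..n}. sc (Am p \<mu> \<nu>) (adapted_frame pistar Dh n e \<nu> p)) \<and>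
             adapted_frame pistar Dh n (new_frame sc n r Am Amb Aab e) \<mu> p =
               new_frame sc n r Am Amb Aab e \<mu> p) \<and>
          (\<forall>a\<in>{n+1..n+r}.
             adapted_frame pistar Dh n (new_frame sc n r Am Amb Aab e) a p =
               (\<Sum>b\<in>{n+1..n+r}. sc (Aab p a b) (adapted_frame pistar Dh n e b p)) \<and>
             adapted_frame pistar Dh n (new_frame sc n r Am Amb Aab e) a p =
               new_frame sc n r Am Amb Aab e a p))"
    proof (intro allI impI ballI)
      fix Am Amb Aab p
      assume H: "(\<forall>p\<in>V. nondegenerate {1..n} (Am p) \<and> nondegenerate {n+1..n+r} (Aab p)) \<and>
       fibre_constant_on \<pi> V Am \<and> fibre_constant_on \<pi> V Aab \<and>
       (\<forall>p\<in>U. \<forall>\<mu>\<in>{1..n}. new_frame sc n r Am Amb Aab e \<mu> p =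
              (\<Sum>\<nu>\<in>{1..n}. sc (Am p \<mu> \<nu>)
                 (e \<nu> p + (\<Sum>b\<in>{n+1..n+r}. sc (conn_coeff sc pistar Dh n r e \<nu> p b) (e b p)))))"
        and pU: "p \<in> U"
      have pV: "p \<in> V" using pU UV by blast
      define E' where "E' = new_frame sc n r Am Amb Aab e"
      let ?Z = "\<lambda>\<mu>. (\<Sum>\<nu>\<in>{1..n}. sc (Am p \<mu> \<nu>) (adapted_frame pistar Dh n e \<nu> p))"
      have part_mu: "adapted_frame pistar Dh n E' \<mu> p = ?Z \<mu> \<and> adapted_frame pistar Dh n E' \<mu> p = E' \<mu> p"
        if mu: "\<mu> \<in> {1..n}" for \<mu>
      proof -
        have "E' \<mu> p = (\<Sum>\<nu>\<in>{1..n}. sc (Am p \<mu> \<nu>)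
                 (e \<nu> p + (\<Sum>b\<in>{n+1..n+r}. sc (conn_coeff sc pistar Dh n r e \<nu> p b) (e b p))))"
          unfolding E'_def using bspec[OF bspec[OF conjunct2[OF conjunct2[OF conjunct2[OF H]]] pU] mu] .
        also have "\<dots> = ?Z \<mu>"
          by (intro sum.cong refl) (simp add: Gam[OF pV])
        finally have "E' \<mu> p = ?Z \<mu>" .
        moreover have "?Z \<mu> \<in> Dh p"
        proof (intro VS.subspace_sum[OF cDh[of p]] VS.subspace_scale[OF cDh[of p]])
          fix \<nu> assume nu: "\<nu> \<in> {1..n}"
          have "e \<nu> p \<in> T p" using eT[OF pV, of \<nu>] nu by simp
          thus "adapted_frame pistar Dh n e \<nu> p \<in> Dh p" using AD[of \<nu> e p, OF nu] by simp
        qed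
        ultimately have "adapted_frame pistar Dh n E' \<mu> p = E' \<mu> p"
          using ADeq[OF mu] by metis
        thus ?thesis using \<open>E' \<mu> p = ?Z \<mu>\<close> by simp
      qed
      show "(\<forall>\<mu>\<in>{1..n}.
             adapted_frame pistar Dh n (new_frame sc n r Am Amb Aab e) \<mu> p =
               (\<Sum>\<nu>\<in>{1..n}. sc (Am p \<mu> \<nu>) (adapted_frame pistar Dh n e \<nu> p)) \<and>
             adapted_frame pistar Dh n (new_frame sc n r Am Amb Aab e) \<mu> p =
               new_frame sc n r Am Amb Aab e \<mu> p) \<and>
          (\<forall>a\<in>{n+1..n+r}.
             adapted_frame pistar Dh n (new_frame sc n r Am Amb Aab e) a p =
               (\<Sum>b\<in>{n+1..n+r}. sc (Aab p a b) (adapted_frame pistar Dh n e b p)) \<and>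
             adapted_frame pistar Dh n (new_frame sc n r Am Amb Aab e) a p =
               new_frame sc n r Am Amb Aab e a p)"
      proof (intro conjI ballI)
        fix \<mu> assume mu: "\<mu> \<in> {1..n}"
        show "adapted_frame pistar Dh n (new_frame sc n r Am Amb Aab e) \<mu> p =
               (\<Sum>\<nu>\<in>{1..n}. sc (Am p \<mu> \<nu>) (adapted_frame pistar Dh n e \<nu> p))"
          using part_mu[OF mu] unfolding E'_def by (elim conjE)
        show "adapted_frame pistar Dh n (new_frame sc n r Am Amb Aab e) \<mu> p =
               new_frame sc n r Am Amb Aab e \<mu> p"
          using part_mu[OF mu] unfolding E'_def by (elim conjE)
      next
        fix a assume a: "a \<in> {n+1..n+r}"
        have A1: "adapted_frame pistar Dh n (new_frame sc n r Am Amb Aab e) a p = new_frame sc n r Am Amb Aab e a p"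
          using a by (simp add: adapted_frame_def)
        have A2: "new_frame sc n r Am Amb Aab e a p = (\<Sum>b\<in>{n+1..n+r}. sc (Aab p a b) (e b p))"
          using a by (simp add: new_frame_def)
        have A3: "(\<Sum>b\<in>{n+1..n+r}. sc (Aab p a b) (e b p)) =
            (\<Sum>b\<in>{n+1..n+r}. sc (Aab p a b) (adapted_frame pistar Dh n e b p))"
          by (intro sum.cong refl) (simp add: adapted_frame_def)
        show "adapted_frame pistar Dh n (new_frame sc n r Am Amb Aab e) a p =
               (\<Sum>b\<in>{n+1..n+r}. sc (Aab p a b) (adapted_frame pistar Dh n e b p))"
          using A1 A2 A3 by simp
        show "adapted_frame pistar Dh n (new_frame sc n r Am Amb Aab e) a p =
               new_frame sc n r Am Amb Aab e a p" by (rule A1)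
      qed
    qed
  qed
qed

end
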